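(* Let $d\geq 3$, $u>0$, and let $\mu$ have distribution $\mathrm{Pois}(u,W^* )$, with law $\mathbb P$. Let $G$ be the graph on $\mathrm{Supp}(\mu)$ defined below, with graph distance $\rho$. Let $E$ be the event that $\rho(v,w)\leq s_d-1$ for all $v,w\in\mathrm{Supp}(\mu)$. For $x,y\in\mathbb Z^d$, let $S(x,y)\subset W^*$ be the set of trajectories that visit both $x$ and $y$. Then for all $x,y\in\mathbb Z^d$, $$\mathbb P(\{x,y\in\mathcal I\}\cap E)\leq \sum_{n=0}^{s_d-1}\ \sum_{z_1,\ldots,z_n\in\mathbb Z^d}\ \prod_{i=0}^n\mathbb E\big[\mu(S(z_i,z_{i+1}))\big],$$ where $z_0=x$ and $z_{n+1}=y$. The $n=0$ term is $\mathbb E[\mu(S(x,y))]$.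
   Context: $s_d=\lceil (d-2)/2\rceil$. $\mathbb Z^d$ carries the sup norm. $W$ is the space of doubly-infinite nearest-neighbour trajectories in $\mathbb Z^d$ tending to infinity at times $\pm\infty$, and $W^*$ is $W$ modulo time shift. The Green function is $g(x,y)=\sum_{t\ge0}P_x(X(t)=y)$ for simple random walk $X$. For finite $K$, $\mathrm{cap}(K)=\sum_{x\in K}P_x(X(t)\notin K\ \forall t\ge1)$, and $e_K(x)=P_x(X(t)\notin K\ \forall t\ge 1)I(x\in K)$. $\mathrm{Pois}(u,W^* )$ is the law of the Poisson point measure $\mu$ on $W^*$ (random interlacement point process at level $u$) such that, for each finite $A$: - the number $N_A$ of trajectories hitting $A$ is Poisson$(u\,\mathrm{cap}(A))$; - parametrizing these trajectories so that they are at time $0$ at their first entrance into $A$, the entrance points are i.i.d. with law $e_A/\mathrm{cap}(A)$; - the forward parts are independent simple random walks; - the backward parts are independent walks conditioned never to return to $A$. $\mathcal I=\bigcup_{w\in\mathrm{Supp}(\mu)}\mathrm{range}(w)$. $G$ is the graph whose vertices are the trajectories in $\mathrm{Supp}(\mu)$, with distinct trajectories adjacent iff their ranges intersect. *)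

theory Defs
  imports "HOL-Probability.Probability"
begin

text \<open>Points of Z^d are vectors int^'d; the dimension is d = CARD('d).\<close>

type_synonym 'd pt = "int ^ 'd"

definition s_d :: "nat \<Rightarrow> nat" where
  "s_d d = nat \<lceil>(real d - 2) / 2\<rceil>"

definition unit_steps :: "'d::finite pt set" where
  "unit_steps = {axis i 1 | i. True} \<union> {axis i (-1) | i. True}"

definition paths :: "(nat \<Rightarrow> 'd::finite pt) measure" where
  "paths = (\<Pi>\<^sub>M t\<in>(UNIV::nat set). count_space UNIV)"

definition srw :: "'d::finite pt \<Rightarrow> (nat \<Rightarrow> 'd pt) measure" where
  "srw x = distr (\<Pi>\<^sub>M t\<in>(UNIV::nat set). measure_pmf (pmf_of_set unit_steps)) paths
                 (\<lambda>\<xi> t. x + (\<Sum>s<t. \<xi> s))"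

definition eqm :: "'d::finite pt set \<Rightarrow> 'd pt \<Rightarrow> real" where
  "eqm K x = (if x \<in> K then measure (srw x) {X \<in> space paths. \<forall>t\<ge>1. X t \<notin> K} else 0)"

definition cap :: "'d::finite pt set \<Rightarrow> real" where
  "cap K = (\<Sum>x\<in>K. eqm K x)"

text \<open>W: doubly infinite nearest-neighbour trajectories tending to infinity at +-infinity
  (each finite set is visited only finitely often).\<close>
definition Wtraj :: "(int \<Rightarrow> 'd::finite pt) set" where
  "Wtraj = {w. (\<forall>t. w (t + 1) - w t \<in> unit_steps) \<and> (\<forall>A. finite A \<longrightarrow> finite {t. w t \<in> A})}"

definition shift_class :: "(int \<Rightarrow> 'd pt) \<Rightarrow> (int \<Rightarrow> 'd pt) set" where
  "shift_class w = {(\<lambda>t. w (t + k)) | k. True}"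

definition Wstar :: "(int \<Rightarrow> 'd::finite pt) set set" where
  "Wstar = shift_class ` Wtraj"

definition trange :: "(int \<Rightarrow> 'd pt) set \<Rightarrow> 'd pt set" where
  "trange c = (\<Union>w\<in>c. range w)"

definition entrance_rep :: "'d pt set \<Rightarrow> (int \<Rightarrow> 'd pt) set \<Rightarrow> (int \<Rightarrow> 'd pt)" where
  "entrance_rep A c = (THE w. w \<in> c \<and> w 0 \<in> A \<and> (\<forall>t<0. w t \<notin> A))"

definition fwd_part :: "(int \<Rightarrow> 'd pt) \<Rightarrow> (nat \<Rightarrow> 'd pt)" where
  "fwd_part w = (\<lambda>n. w (int n))"

definition bwd_part :: "(int \<Rightarrow> 'd pt) \<Rightarrow> (nat \<Rightarrow> 'd pt)" where
  "bwd_part w = (\<lambda>n. w (- int n))"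

text \<open>This is e_A(x) times (forward SRW) x (backward SRW conditioned on no return to A).\<close>
definition QA :: "'d::finite pt set \<Rightarrow> ((nat \<Rightarrow> 'd pt) \<times> (nat \<Rightarrow> 'd pt)) set \<Rightarrow> ennreal" where
  "QA A S = (\<Sum>x\<in>A. emeasure (srw x \<Otimes>\<^sub>M srw x) {(f, b) \<in> S. \<forall>t\<ge>1. b t \<notin> A})"

text \<open>A point configuration on W* is a multiplicity function W* -> nat.
  mu(B) = total mass of B.\<close>
definition pmass :: "((int \<Rightarrow> 'd pt) set \<Rightarrow> nat) \<Rightarrow> (int \<Rightarrow> 'd pt) set set \<Rightarrow> ennreal" where
  "pmass m B = (\<integral>\<^sup>+ c. ennreal (of_nat (m c)) \<partial>count_space B)"

definition Ncount :: "((int \<Rightarrow> 'd::finite pt) set \<Rightarrow> nat) \<Rightarrow> 'd pt set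
     \<Rightarrow> ((nat \<Rightarrow> 'd pt) \<times> (nat \<Rightarrow> 'd pt)) set \<Rightarrow> ennreal" where
  "Ncount m A S = pmass m {c \<in> Wstar. trange c \<inter> A \<noteq> {} \<and>
       (fwd_part (entrance_rep A c), bwd_part (entrance_rep A c)) \<in> S}"

text \<open>mu (a random configuration on the probability space M) is a random interlacement point
  process at level u, i.e. has law Pois(u,W*): it lives on W*, and for every finite A the
  trajectories hitting A (parametrized at first entrance) form a Poisson point process with
  intensity u Q_A: counts in disjoint measurable sets are independent and Poisson(u Q_A(S)).\<close>
definition interlacement_pp :: "real \<Rightarrow> 'w measure \<Rightarrow> ('w \<Rightarrow> (int \<Rightarrow> 'd::finite pt) set \<Rightarrow> nat) \<Rightarrow> bool" where
  "interlacement_pp u M mu \<longleftrightarrow>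
     prob_space M \<and>
     (\<forall>\<omega>\<in>space M. \<forall>c. c \<notin> Wstar \<longrightarrow> mu \<omega> c = 0) \<and>
     (\<forall>A. finite A \<longrightarrow>
        (\<forall>S \<in> sets (paths \<Otimes>\<^sub>M paths). \<forall>k::nat.
            measure M {\<omega> \<in> space M. Ncount (mu \<omega>) A S = of_nat k}
              = (u * enn2real (QA A S)) ^ k * exp (- (u * enn2real (QA A S))) / fact k) \<and>
        (\<forall>(J::nat set) S. finite J \<longrightarrow> disjoint_family_on S J \<longrightarrow>
            (\<forall>j\<in>J. S j \<in> sets (paths \<Otimes>\<^sub>M paths)) \<longrightarrow>
            prob_space.indep_vars M (\<lambda>_. borel) (\<lambda>j \<omega>. Ncount (mu \<omega>) A (S j)) J))"

definition supp :: "((int \<Rightarrow> 'd pt) set \<Rightarrow> nat) \<Rightarrow> (int \<Rightarrow> 'd pt) set set" where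
  "supp m = {c. m c > 0}"

definition interlacement_set :: "((int \<Rightarrow> 'd pt) set \<Rightarrow> nat) \<Rightarrow> 'd pt set" where
  "interlacement_set m = (\<Union>c\<in>supp m. trange c)"

definition G_adj :: "(int \<Rightarrow> 'd pt) set \<Rightarrow> (int \<Rightarrow> 'd pt) set \<Rightarrow> bool" where
  "G_adj v w \<longleftrightarrow> v \<noteq> w \<and> trange v \<inter> trange w \<noteq> {}"

text \<open>Graph distance in the graph with vertex set V and adjacency adj (infinity if no path).\<close>
definition graph_dist :: "('a \<Rightarrow> 'a \<Rightarrow> bool) \<Rightarrow> 'a set \<Rightarrow> 'a \<Rightarrow> 'a \<Rightarrow> enat" where
  "graph_dist adj V v w =
     (INF p \<in> {p. p \<noteq> [] \<and> hd p = v \<and> last p = w \<and> set p \<subseteq> V \<and>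
                 (\<forall>i < length p - 1. adj (p ! i) (p ! (i + 1)))}. enat (length p - 1))"

definition S_both :: "'d::finite pt \<Rightarrow> 'd pt \<Rightarrow> (int \<Rightarrow> 'd pt) set set" where
  "S_both x y = {c \<in> Wstar. x \<in> trange c \<and> y \<in> trange c}"

end

theory Submission
  imports Defs "HOL-Library.Nat_Bijection"
begin

definition Rng :: "(nat \<Rightarrow> 'd pt) \<times> (nat \<Rightarrow> 'd pt) \<Rightarrow> 'd pt set" where
  "Rng p = range (fst p) \<union> range (snd p)"

definition key :: "'d pt set \<Rightarrow> (int \<Rightarrow> 'd pt) set \<Rightarrow> (nat \<Rightarrow> 'd pt) \<times> (nat \<Rightarrow> 'd pt)" where
  "key A c = (fwd_part (entrance_rep A c), bwd_part (entrance_rep A c))"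

lemma range_shift: "range (\<lambda>t. w (t + (k::int))) = range w"
proof
  show "range w \<subseteq> range (\<lambda>t. w (t + k))"
  proof
    fix a assume "a \<in> range w" then obtain t where "a = w t" by auto
    then have "a = w ((t - k) + k)" by simp
    then show "a \<in> range (\<lambda>t. w (t + k))" by blast
  qed
qed auto

lemma trange_shift_class: "trange (shift_class w) = range w"
  unfolding trange_def shift_class_def
proof
  show "range w \<subseteq> (\<Union>w\<in>{\<lambda>t. w (t + k) |k. True}. range w)"
  proof
    fix a assume "a \<in> range w"
    moreover have "(\<lambda>t. w (t + 0)) \<in> {\<lambda>t. w (t + k) |k. True}" by blast
    ultimately show "a \<in> (\<Union>w\<in>{\<lambda>t. w (t + k) |k. True}. range w)" by auto
  qed
qed (auto simp: range_shift)

lemma range_fwd_bwd: "range (fwd_part e) \<union> range (bwd_part e) = range e"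
proof
  show "range e \<subseteq> range (fwd_part e) \<union> range (bwd_part e)"
  proof
    fix a assume "a \<in> range e" then obtain t where t: "a = e t" by auto
    show "a \<in> range (fwd_part e) \<union> range (bwd_part e)"
    proof (cases "t \<ge> 0")
      case True
      then have "a = fwd_part e (nat t)" using t by (simp add: fwd_part_def)
      then show ?thesis by blast
    next
      case False
      then have "a = bwd_part e (nat (-t))" using t by (simp add: bwd_part_def)
      then show ?thesis by blast
    qed
  qed
qed (auto simp: fwd_part_def bwd_part_def)

lemma entrance_rep_in:
  assumes c: "c \<in> Wstar" and A: "finite A" and hit: "trange c \<inter> A \<noteq> {}"
  shows "entrance_rep A c \<in> c" "trange c = range (entrance_rep A c)"
proof -
  obtain w where w: "w \<in> Wtraj" and cw: "c = shift_class w" using c unfolding Wstar_def by (rule imageE) blast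
  have fin: "finite {t. w t \<in> A}" using w A by (auto simp: Wtraj_def)
  have ne: "{t. w t \<in> A} \<noteq> {}" using hit by (auto simp: cw trange_shift_class)
  define t0 where "t0 = Min {t. w t \<in> A}"
  have t0A: "w t0 \<in> A" using Min_in[OF fin ne] by (simp add: t0_def)
  have t0min: "\<And>t. w t \<in> A \<Longrightarrow> t0 \<le> t" using Min_le[OF fin] by (simp add: t0_def)
  have ex: "\<exists>!w'. w' \<in> c \<and> w' 0 \<in> A \<and> (\<forall>t<0. w' t \<notin> A)"
  proof (rule ex1I[of _ "\<lambda>t. w (t + t0)"])
    show "(\<lambda>t. w (t + t0)) \<in> c \<and> (\<lambda>t. w (t + t0)) 0 \<in> A \<and> (\<forall>t<0. (\<lambda>t. w (t + t0)) t \<notin> A)"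
    proof (intro conjI allI impI)
      show "(\<lambda>t. w (t + t0)) \<in> c" unfolding cw shift_class_def by blast
      show "(\<lambda>t. w (t + t0)) 0 \<in> A" using t0A by simp
      fix t :: int assume "t < 0"
      then show "(\<lambda>t. w (t + t0)) t \<notin> A" using t0min[of "t + t0"] by auto
    qed
  next
    fix w' assume h: "w' \<in> c \<and> w' 0 \<in> A \<and> (\<forall>t<0. w' t \<notin> A)"
    then obtain k where k: "w' = (\<lambda>t. w (t + k))" by (auto simp: cw shift_class_def)
    have "w k \<in> A" using h k by simp
    then have "t0 \<le> k" by (rule t0min)
    moreover have "\<not> t0 < k"
    proof
      assume "t0 < k"
      then have "w' (t0 - k) \<notin> A" using h by simp
      then show False using k t0A by simp
    qed
    ultimately show "w' = (\<lambda>t. w (t + t0))" using k by simp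
  qed
  show e: "entrance_rep A c \<in> c"
    unfolding entrance_rep_def using theI'[OF ex] by blast
  then obtain k where "entrance_rep A c = (\<lambda>t. w (t + k))" by (auto simp: cw shift_class_def)
  then have "range (entrance_rep A c) = range w" using range_shift[of w k] by (simp only:)
  moreover have "trange c = range w" using trange_shift_class[of w] cw by (simp only:)
  ultimately show "trange c = range (entrance_rep A c)" by (simp only:)
qed

lemma Rng_key:
  assumes "c \<in> Wstar" "finite A" "trange c \<inter> A \<noteq> {}"
  shows "Rng (key A c) = trange c"
proof -
  have "Rng (key A c) = range (fwd_part (entrance_rep A c)) \<union> range (bwd_part (entrance_rep A c))"
    by (simp add: Rng_def key_def)
  also have "\<dots> = range (entrance_rep A c)" by (rule range_fwd_bwd)
  also have "\<dots> = trange c" using entrance_rep_in(2)[OF assms] by (rule sym)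
  finally show ?thesis .
qed

fun walk :: "('a \<Rightarrow> 'a \<Rightarrow> bool) \<Rightarrow> 'a list \<Rightarrow> bool" where
  "walk r [] = True"
| "walk r [a] = True"
| "walk r (a # b # xs) = (r a b \<and> walk r (b # xs))"

lemma walk_nth: "walk r p \<longleftrightarrow> (\<forall>i < length p - 1. r (p ! i) (p ! (i + 1)))"
proof (induction r p rule: walk.induct)
  case (3 r a b xs)
  have "(\<forall>i < length (a # b # xs) - 1. r ((a # b # xs) ! i) ((a # b # xs) ! (i + 1)))
        \<longleftrightarrow> (\<forall>i < Suc (length xs). r ((a # b # xs) ! i) ((a # b # xs) ! (i + 1)))" by simp
  also have "\<dots> \<longleftrightarrow> r a b \<and> (\<forall>i < length xs. r ((b # xs) ! i) ((b # xs) ! (i + 1)))"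
    unfolding All_less_Suc2 by simp
  finally show ?case using 3 by simp
qed auto

lemma walk_append: "walk r (xs @ [a] @ ys) \<longleftrightarrow> walk r (xs @ [a]) \<and> walk r (a # ys)"
proof (induction xs)
  case Nil then show ?case by simp
next
  case (Cons b xs)
  then show ?case by (cases xs) auto
qed

lemma walk_distinct:
  assumes "walk r p" "p \<noteq> []"
  shows "\<exists>q. distinct q \<and> walk r q \<and> q \<noteq> [] \<and> hd q = hd p \<and> last q = last p \<and> set q \<subseteq> set p \<and> length q \<le> length p"
  using assms
proof (induction "length p" arbitrary: p rule: less_induct)
  case less
  show ?case
  proof (cases "distinct p")
    case True then show ?thesis using less.prems by blast
  next
    case False
    then obtain xs a ys zs where p: "p = xs @ [a] @ ys @ [a] @ zs"
      using not_distinct_decomp by blast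
    define q where "q = xs @ [a] @ zs"
    have w1: "walk r (xs @ [a])" and w2: "walk r (a # ys @ [a] @ zs)"
      using less.prems(1) unfolding p walk_append by auto
    have "walk r ((a # ys) @ [a] @ zs)" using w2 by simp
    then have "walk r (a # zs)" unfolding walk_append by simp
    then have wq: "walk r q" using w1 unfolding q_def walk_append by simp
    have lq: "length q < length p" unfolding p q_def by simp
    have hq: "hd q = hd p" unfolding p q_def by (cases xs) auto
    have lq2: "last q = last p" unfolding p q_def by (cases zs) auto
    have sq: "set q \<subseteq> set p" unfolding p q_def by auto
    have "q \<noteq> []" unfolding q_def by simp
    from less.hyps[OF lq wq this] obtain q' where
      "distinct q' \<and> walk r q' \<and> q' \<noteq> [] \<and> hd q' = hd q \<and> last q' = last q \<and> set q' \<subseteq> set q \<and> length q' \<le> length q"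
      by blast
    then show ?thesis using hq lq2 sq lq by (metis dual_order.trans less_imp_le_nat)
  qed
qed

definition pois :: "real \<Rightarrow> nat \<Rightarrow> real" where
  "pois l k = l ^ k * exp (- l) / fact k"

lemma exp_sums_real: "(\<lambda>n. l ^ n / fact n) sums exp (l::real)"
proof -
  have "(\<lambda>n. l ^ n /\<^sub>R fact n) = (\<lambda>n. l ^ n / fact n)" by (simp add: divide_inverse mult.commute)
  then show ?thesis using exp_converges[of l] by simp
qed

lemma pois_tail:
  assumes l: "l \<ge> 0"
  shows "1 - (\<Sum>j<k. pois l j) \<le> l ^ k"
proof -
  define f where "f n = l ^ n / fact n" for n
  have fs: "f sums exp l" unfolding f_def by (rule exp_sums_real)
  have s1: "(\<lambda>n. f (n + k)) sums (exp l - (\<Sum>j<k. f j))"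
    using sums_split_initial_segment[OF fs, of k] by simp
  have s2: "(\<lambda>n. l ^ k * f n) sums (l ^ k * exp l)" by (rule sums_mult[OF fs])
  have le: "f (n + k) \<le> l ^ k * f n" for n
  proof -
    have "fact n \<le> (fact (n + k) :: real)" by (rule fact_mono) simp
    moreover have "fact n > (0::real)" by simp
    ultimately have "l ^ (n + k) / fact (n + k) \<le> l ^ (n + k) / fact n"
      using l by (intro divide_left_mono) auto
    then show ?thesis by (simp add: f_def power_add field_simps)
  qed
  have "exp l - (\<Sum>j<k. f j) \<le> l ^ k * exp l" by (rule sums_le[OF le s1 s2])
  then have "exp (-l) * (exp l - (\<Sum>j<k. f j)) \<le> exp (-l) * (l ^ k * exp l)"
    by (intro mult_left_mono) auto
  moreover have "exp (-l) * (exp l - (\<Sum>j<k. f j)) = 1 - (\<Sum>j<k. pois l j)"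
    by (simp add: pois_def f_def sum_distrib_left right_diff_distrib exp_minus field_simps)
  moreover have "exp (-l) * (l ^ k * exp l) = l ^ k" by (simp add: exp_minus field_simps)
  ultimately show ?thesis by simp
qed

lemma pois_mean: "(\<lambda>k. real k * pois l k) sums l"
proof -
  have "(\<lambda>m. l * exp (-l) * (l ^ m / fact m)) sums (l * exp (-l) * exp l)"
    by (rule sums_mult[OF exp_sums_real])
  moreover have "l * exp (-l) * exp l = l" by (simp add: exp_minus)
  moreover have "(\<lambda>m. l * exp (-l) * (l ^ m / fact m)) = (\<lambda>m. real (Suc m) * pois l (Suc m))"
  proof (rule ext)
    fix m
    have "real (Suc m) * pois l (Suc m) = (real (Suc m) * (l ^ Suc m * exp (- l))) / (real (Suc m) * fact m)"
      unfolding pois_def fact_Suc by (simp only: times_divide_eq_right)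
    also have "\<dots> = (l ^ Suc m * exp (- l)) / fact m"
      by (rule nonzero_mult_divide_mult_cancel_left) simp
    also have "\<dots> = l * exp (-l) * (l ^ m / fact m)"
      by (simp only: power_Suc divide_inverse mult_ac)
    finally show "l * exp (-l) * (l ^ m / fact m) = real (Suc m) * pois l (Suc m)" by (rule sym)
  qed
  ultimately have "(\<lambda>m. real (Suc m) * pois l (Suc m)) sums l" by simp
  then show ?thesis using sums_Suc_iff[of "\<lambda>k. real k * pois l k" l] by simp
qed

lemma pois_nonneg: "l \<ge> 0 \<Longrightarrow> pois l k \<ge> 0"
  by (simp add: pois_def)

lemma pmass_ind: "pmass m X = (\<integral>\<^sup>+c. ennreal (of_nat (m c)) * indicator X c \<partial>count_space UNIV)"
  unfolding pmass_def by (rule nn_integral_count_space_indicator) simp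

lemma pmass_disj:
  assumes "finite F" "disjoint_family_on X F"
  shows "pmass m (\<Union>B\<in>F. X B) = (\<Sum>B\<in>F. pmass m (X B))"
proof -
  have "pmass m (\<Union>B\<in>F. X B) = (\<integral>\<^sup>+c. (\<Sum>B\<in>F. ennreal (of_nat (m c)) * indicator (X B) c) \<partial>count_space UNIV)"
    unfolding pmass_ind indicator_UN_disjoint[OF assms] by (simp add: sum_distrib_left)
  also have "\<dots> = (\<Sum>B\<in>F. pmass m (X B))"
    unfolding pmass_ind by (rule nn_integral_sum) simp
  finally show ?thesis .
qed

lemma pmass_card:
  assumes "finite F" "F \<subseteq> X" "\<And>c. c \<in> F \<Longrightarrow> m c > 0"
  shows "of_nat (card F) \<le> pmass m X"
proof -
  have "of_nat (card F) = (\<Sum>c\<in>F. (1::ennreal))" by simp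
  also have "\<dots> \<le> (\<Sum>c\<in>F. ennreal (of_nat (m c)))"
    using assms(3) by (intro sum_mono) (simp add: Suc_le_eq)
  also have "\<dots> = pmass m F" unfolding pmass_def by (rule nn_integral_count_space_finite[symmetric, OF assms(1)])
  also have "\<dots> \<le> pmass m X" unfolding pmass_ind
    using assms(2) by (intro nn_integral_mono mult_left_mono) (auto simp: indicator_def)
  finally show ?thesis .
qed

lemma prod_mono_ennreal:
  fixes f g :: "'a \<Rightarrow> ennreal"
  shows "(\<And>i. i \<in> I \<Longrightarrow> f i \<le> g i) \<Longrightarrow> prod f I \<le> prod g I"
proof (induction I rule: infinite_finite_induct)
  case (insert x F)
  then show ?case by (simp add: mult_mono)
qed auto

context prob_space
begin

lemma pois_ge:
  fixes N :: "'a \<Rightarrow> ennreal"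
  assumes N: "N \<in> borel_measurable M" and l: "l \<ge> 0"
    and P: "\<And>k. measure M {\<omega> \<in> space M. N \<omega> = of_nat k} = pois l k"
  shows "prob {\<omega> \<in> space M. N \<omega> \<ge> of_nat k} \<le> l ^ k"
proof -
  define U where "U = (\<Union>j\<in>{..<k}. {\<omega> \<in> space M. N \<omega> = of_nat j})"
  have ev: "\<And>j. {\<omega> \<in> space M. N \<omega> = of_nat j} \<in> events" using N by measurable
  have Uev: "U \<in> events" unfolding U_def using ev by auto
  have "{\<omega> \<in> space M. N \<omega> \<ge> of_nat k} \<subseteq> space M - U"
    unfolding U_def by (auto simp: not_le[symmetric] of_nat_le_iff) 
  then have "prob {\<omega> \<in> space M. N \<omega> \<ge> of_nat k} \<le> prob (space M - U)"
    using Uev by (intro finite_measure_mono) auto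
  also have "\<dots> = 1 - prob U" using Uev by (rule prob_compl)
  also have "prob U = (\<Sum>j<k. prob {\<omega> \<in> space M. N \<omega> = of_nat j})"
    unfolding U_def
    by (intro finite_measure_finite_Union) (auto simp: disjoint_family_on_def ev)
  also have "\<dots> = (\<Sum>j<k. pois l j)" by (simp add: P)
  finally show ?thesis using pois_tail[OF l, of k] by linarith
qed

lemma pois_mean_ge:
  fixes N :: "'a \<Rightarrow> ennreal"
  assumes N: "N \<in> borel_measurable M" and l: "l \<ge> 0"
    and P: "\<And>k. measure M {\<omega> \<in> space M. N \<omega> = of_nat k} = pois l k"
  shows "ennreal l \<le> (\<integral>\<^sup>+\<omega>. N \<omega> \<partial>M)"
proof -
  have ev: "\<And>j. {\<omega> \<in> space M. N \<omega> = of_nat j} \<in> events" using N by measurable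
  have "(\<lambda>k. ennreal (real k * pois l k)) sums ennreal l"
    using pois_mean[of l] l pois_nonneg[OF l] by (subst sums_ennreal) auto
  then have "ennreal l = (\<Sum>k. ennreal (real k * pois l k))" by (rule sums_unique)
  also have "\<dots> = (\<Sum>k. of_nat k * emeasure M {\<omega> \<in> space M. N \<omega> = of_nat k})"
  proof (intro suminf_cong)
    fix k
    have e: "emeasure M {\<omega> \<in> space M. N \<omega> = of_nat k} = ennreal (pois l k)"
      using P[of k] by (simp add: emeasure_eq_measure)
    show "ennreal (real k * pois l k) = of_nat k * emeasure M {\<omega> \<in> space M. N \<omega> = of_nat k}"
      unfolding e using ennreal_mult[of "real k" "pois l k"] pois_nonneg[OF l, of k] by (simp add: ennreal_of_nat_eq_real_of_nat)
  qed
  also have "\<dots> = (\<Sum>k. \<integral>\<^sup>+\<omega>. of_nat k * indicator {\<omega> \<in> space M. N \<omega> = of_nat k} \<omega> \<partial>M)"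
    using ev by (simp add: nn_integral_cmult_indicator)
  also have "\<dots> = (\<integral>\<^sup>+\<omega>. (\<Sum>k. of_nat k * indicator {\<omega> \<in> space M. N \<omega> = of_nat k} \<omega>) \<partial>M)"
    using ev by (intro nn_integral_suminf[symmetric]) auto
  also have "\<dots> \<le> (\<integral>\<^sup>+\<omega>. N \<omega> \<partial>M)"
  proof (intro nn_integral_mono)
    fix \<omega> assume \<omega>: "\<omega> \<in> space M"
    show "(\<Sum>k. of_nat k * indicator {\<omega> \<in> space M. N \<omega> = of_nat k} \<omega>) \<le> N \<omega>"
    proof (cases "\<exists>k0. N \<omega> = of_nat k0")
      case True
      then obtain k0 where k0: "N \<omega> = of_nat k0" by blast
      have "(\<Sum>k. of_nat k * indicator {\<omega> \<in> space M. N \<omega> = of_nat k} \<omega>) =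
            (\<Sum>k\<in>{k0}. of_nat k * indicator {\<omega> \<in> space M. N \<omega> = of_nat k} \<omega> :: ennreal)"
      proof (rule suminf_finite)
        fix k assume "k \<notin> {k0}"
        then have "N \<omega> \<noteq> of_nat k" using k0 by (simp add: ennreal_of_nat_eq_real_of_nat)
        then show "of_nat k * indicator {\<omega> \<in> space M. N \<omega> = of_nat k} \<omega> = (0::ennreal)" by simp
      qed simp
      then show ?thesis using k0 \<omega> by simp
    next
      case False
      then have "(\<lambda>k. of_nat k * indicator {\<omega> \<in> space M. N \<omega> = of_nat k} \<omega>) = (\<lambda>k. 0::ennreal)" by auto
      then show ?thesis by simp
    qed
  qed
  finally show ?thesis .
qed

end

definition Pset :: "'d::finite pt list \<Rightarrow> nat \<Rightarrow> ((nat \<Rightarrow> 'd pt) \<times> (nat \<Rightarrow> 'd pt)) set" where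
  "Pset z i = {p. z ! i \<in> Rng p \<and> z ! Suc i \<in> Rng p}"

definition Qset :: "'d::finite pt list \<Rightarrow> nat \<Rightarrow> nat set \<Rightarrow> ((nat \<Rightarrow> 'd pt) \<times> (nat \<Rightarrow> 'd pt)) set" where
  "Qset z n B = {p. \<forall>i\<in>{..n}. (p \<in> Pset z i \<longleftrightarrow> i \<in> B)}"

definition Yset :: "'d::finite pt set \<Rightarrow> 'd pt list \<Rightarrow> nat \<Rightarrow> nat set \<Rightarrow> (int \<Rightarrow> 'd pt) set set" where
  "Yset A z n B = {c \<in> Wstar. trange c \<inter> A \<noteq> {} \<and> key A c \<in> Qset z n B}"

lemma Ncount_Y: "Ncount m A (Qset z n B) = pmass m (Yset A z n B)"
  unfolding Ncount_def Yset_def key_def by simp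

lemma space_pp: "space (paths \<Otimes>\<^sub>M paths) = UNIV"
  by (simp add: space_pair_measure paths_def space_PiM)

lemma Rng_iff: "a \<in> Rng p \<longleftrightarrow> (\<exists>t. fst p t = a \<or> snd p t = a)"
  unfolding Rng_def by blast

lemma Pset_meas: "Pset z i \<in> sets (paths \<Otimes>\<^sub>M paths)"
proof -
  have "Pset z i = {p \<in> space (paths \<Otimes>\<^sub>M paths). (\<exists>t. fst p t = z ! i \<or> snd p t = z ! i) \<and>
      (\<exists>t. fst p t = z ! Suc i \<or> snd p t = z ! Suc i)}"
    unfolding space_pp Pset_def Rng_iff by simp
  also have "\<dots> \<in> sets (paths \<Otimes>\<^sub>M paths)"
    unfolding paths_def by measurable
  finally show ?thesis .
qed

lemma Qset_meas: "Qset z n B \<in> sets (paths \<Otimes>\<^sub>M paths)"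
proof -
  have "Qset z n B = space (paths \<Otimes>\<^sub>M paths) \<inter>
     (\<Inter>i\<in>{..n}. if i \<in> B then Pset z i else space (paths \<Otimes>\<^sub>M paths) - Pset z i)"
    unfolding space_pp Qset_def by auto
  also have "\<dots> \<in> sets (paths \<Otimes>\<^sub>M paths)"
    using Pset_meas by (intro sets.Int sets.top sets.finite_INT) auto
  finally show ?thesis .
qed

lemma Qset_mem: "B \<subseteq> {..n} \<Longrightarrow> p \<in> Qset z n B \<longleftrightarrow> B = {j\<in>{..n}. p \<in> Pset z j}"
  unfolding Qset_def by auto

lemma Qset_disj: 
  assumes a1: "B1 \<subseteq> {..n}" and a2: "B2 \<subseteq> {..n}" and ne: "B1 \<noteq> B2"
  shows "Qset z n B1 \<inter> Qset z n B2 = {}"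
proof -
  { fix p assume "p \<in> Qset z n B1" "p \<in> Qset z n B2"
    then have "B1 = B2" using Qset_mem[OF a1, of p] Qset_mem[OF a2, of p] by simp
    then have False using ne by simp }
  then show ?thesis by blast
qed

lemma finite_Fi: "finite {B. B \<subseteq> {..n::nat} \<and> i \<in> B}"
  by (rule finite_subset[of _ "Pow {..n}"]) auto

lemma Sboth_decomp:
  assumes i: "i \<le> n" and len: "length z = Suc (Suc n)"
  shows "S_both (z ! i) (z ! Suc i) = (\<Union>B\<in>{B. B \<subseteq> {..n} \<and> i \<in> B}. Yset (set z) z n B)"
proof (intro equalityI subsetI)
  fix c assume c: "c \<in> S_both (z ! i) (z ! Suc i)"
  then have cW: "c \<in> Wstar" and ci: "z ! i \<in> trange c" and ci2: "z ! Suc i \<in> trange c"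
    unfolding S_both_def by blast+
  have zi: "z ! i \<in> set z" using i len by simp
  have hit: "trange c \<inter> set z \<noteq> {}" using ci zi by blast
  have R: "Rng (key (set z) c) = trange c" by (rule Rng_key[OF cW _ hit]) simp
  define B where "B = {j\<in>{..n}. key (set z) c \<in> Pset z j}"
  have Bsub: "B \<subseteq> {..n}" unfolding B_def by blast
  have "key (set z) c \<in> Pset z i" unfolding Pset_def using ci ci2 R by simp
  then have iB: "i \<in> B" using i unfolding B_def by blast
  have "key (set z) c \<in> Qset z n B" using Qset_mem[OF Bsub] unfolding B_def by blast
  then have "c \<in> Yset (set z) z n B" unfolding Yset_def using cW hit by blast
  then show "c \<in> (\<Union>B\<in>{B. B \<subseteq> {..n} \<and> i \<in> B}. Yset (set z) z n B)"
    using Bsub iB by blast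
next
  fix c assume "c \<in> (\<Union>B\<in>{B. B \<subseteq> {..n} \<and> i \<in> B}. Yset (set z) z n B)"
  then obtain B where B: "B \<subseteq> {..n}" "i \<in> B" and cY: "c \<in> Yset (set z) z n B" by blast
  then have cW: "c \<in> Wstar" and hit: "trange c \<inter> set z \<noteq> {}"
    and k: "key (set z) c \<in> Qset z n B" unfolding Yset_def by blast+
  have R: "Rng (key (set z) c) = trange c" by (rule Rng_key[OF cW _ hit]) simp
  have "key (set z) c \<in> Pset z i" using k B i unfolding Qset_def by blast
  then have "z ! i \<in> trange c \<and> z ! Suc i \<in> trange c" unfolding Pset_def using R by simp
  then have "z ! i \<in> trange c" "z ! Suc i \<in> trange c" by blast+
  then show "c \<in> S_both (z ! i) (z ! Suc i)" using cW unfolding S_both_def by blast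
qed

lemma pmass_Sboth:
  assumes i: "i \<le> n" and len: "length z = Suc (Suc n)"
  shows "pmass m (S_both (z ! i) (z ! Suc i)) = (\<Sum>B\<in>{B. B \<subseteq> {..n} \<and> i \<in> B}. Ncount m (set z) (Qset z n B))"
  unfolding Sboth_decomp[OF assms] Ncount_Y
proof (rule pmass_disj[OF finite_Fi])
  show "disjoint_family_on (Yset (set z) z n) {B. B \<subseteq> {..n} \<and> i \<in> B}"
  proof (unfold disjoint_family_on_def, intro ballI impI)
    fix B1 B2 assume "B1 \<in> {B. B \<subseteq> {..n} \<and> i \<in> B}" "B2 \<in> {B. B \<subseteq> {..n} \<and> i \<in> B}" "B1 \<noteq> B2"
    then have "Qset z n B1 \<inter> Qset z n B2 = {}" by (intro Qset_disj) auto
    then show "Yset (set z) z n B1 \<inter> Yset (set z) z n B2 = {}" unfolding Yset_def by blast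
  qed
qed


definition Tset :: "nat \<Rightarrow> (nat \<Rightarrow> nat set) set" where
  "Tset n = PiE {..n} (\<lambda>i. {B. B \<subseteq> {..n} \<and> i \<in> B})"

definition kc :: "nat \<Rightarrow> (nat \<Rightarrow> nat set) \<Rightarrow> nat set \<Rightarrow> nat" where
  "kc n T B = card {i\<in>{..n}. T i = B}"

definition Gev :: "'w measure \<Rightarrow> ('w \<Rightarrow> (int \<Rightarrow> 'd::finite pt) set \<Rightarrow> nat) \<Rightarrow> 'd pt list \<Rightarrow> nat
     \<Rightarrow> (nat \<Rightarrow> nat set) \<Rightarrow> 'w set" where
  "Gev M mu z n T = {\<omega> \<in> space M. \<forall>B \<in> Pow {..n}. of_nat (kc n T B) \<le> Ncount (mu \<omega>) (set z) (Qset z n B)}"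

lemma finite_Tset: "finite (Tset n)"
  unfolding Tset_def by (intro finite_PiE) (auto intro: finite_Fi)

lemma kc_prod:
  assumes T: "T \<in> Tset n"
  shows "(\<Prod>B\<in>Pow {..n}. (f B :: real) ^ kc n T B) = (\<Prod>i\<in>{..n}. f (T i))"
proof -
  have sub: "T ` {..n} \<subseteq> Pow {..n}" using T by (auto simp: Tset_def PiE_def Pi_def)
  have "(\<Prod>B\<in>Pow {..n}. f B ^ kc n T B) = (\<Prod>B\<in>Pow {..n}. \<Prod>i\<in>{x. x \<in> {..n} \<and> T x = B}. f (T i))"
  proof (rule prod.cong[OF refl])
    fix B assume "B \<in> Pow {..n}"
    have "(\<Prod>i\<in>{x. x \<in> {..n} \<and> T x = B}. f (T i)) = (\<Prod>i\<in>{x. x \<in> {..n} \<and> T x = B}. f B)"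
      by (rule prod.cong) auto
    then show "f B ^ kc n T B = (\<Prod>i\<in>{x. x \<in> {..n} \<and> T x = B}. f (T i))"
      by (simp add: kc_def)
  qed
  also have "\<dots> = (\<Prod>i\<in>{..n}. f (T i))"
    by (rule prod.group[OF _ _ sub]) auto
  finally show ?thesis .
qed

lemma stepA:
  fixes mu :: "'w \<Rightarrow> (int \<Rightarrow> int ^ 'd::finite) set \<Rightarrow> nat" and z :: "'d pt list"
  assumes pp: "interlacement_pp u M mu" and u: "u > 0" and len: "length z = Suc (Suc n)"
  shows "(\<Union>T\<in>Tset n. Gev M mu z n T) \<in> sets M"
    "emeasure M (\<Union>T\<in>Tset n. Gev M mu z n T) \<le>
      (\<Prod>i\<in>{0..n}. \<integral>\<^sup>+\<omega>. pmass (mu \<omega>) (S_both (z ! i) (z ! (i + 1))) \<partial>M)"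
proof -
  interpret prob_space M using pp by (simp add: interlacement_pp_def)
  define A where "A = set z"
  have fA: "finite A" by (simp add: A_def)
  have ax1: "\<And>S k. S \<in> sets (paths \<Otimes>\<^sub>M paths) \<Longrightarrow>
      measure M {\<omega> \<in> space M. Ncount (mu \<omega>) A S = of_nat k}
        = (u * enn2real (QA A S)) ^ k * exp (- (u * enn2real (QA A S))) / fact k"
    using pp fA unfolding interlacement_pp_def by blast
  have ax2: "\<And>J S. finite (J::nat set) \<Longrightarrow> disjoint_family_on S J \<Longrightarrow>
            (\<forall>j\<in>J. S j \<in> sets (paths \<Otimes>\<^sub>M paths)) \<Longrightarrow>
            indep_vars (\<lambda>_. borel) (\<lambda>j \<omega>. Ncount (mu \<omega>) A (S j)) J"
    using pp fA unfolding interlacement_pp_def by blast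
  define N where "N B \<omega> = Ncount (mu \<omega>) A (Qset z n B)" for B \<omega>
  define lam where "lam B = u * enn2real (QA A (Qset z n B))" for B
  have lam_nn: "\<And>B. lam B \<ge> 0" using u by (simp add: lam_def)
  have Ppois: "\<And>B k. measure M {\<omega> \<in> space M. N B \<omega> = of_nat k} = pois (lam B) k"
    unfolding N_def lam_def pois_def by (rule ax1[OF Qset_meas])
  define J where "J = set_encode ` Pow {..n}"
  have fJ: "finite J" unfolding J_def by simp
  have Jne: "J \<noteq> {}" unfolding J_def using Pow_bottom by blast
  have dec: "\<And>B. B \<in> Pow {..n} \<Longrightarrow> set_decode (set_encode B) = B"
    by (simp add: finite_subset)
  have indep: "indep_vars (\<lambda>_. borel) (\<lambda>j \<omega>. N (set_decode j) \<omega>) J"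
    unfolding N_def
  proof (rule ax2[OF fJ])
    show "disjoint_family_on (\<lambda>j. Qset z n (set_decode j)) J"
    proof (unfold disjoint_family_on_def, intro ballI impI)
      fix j1 j2 assume "j1 \<in> J" "j2 \<in> J" "j1 \<noteq> j2"
      then obtain B1 B2 where "B1 \<in> Pow {..n}" "B2 \<in> Pow {..n}" "j1 = set_encode B1" "j2 = set_encode B2"
        unfolding J_def by blast
      with \<open>j1 \<noteq> j2\<close> dec show "Qset z n (set_decode j1) \<inter> Qset z n (set_decode j2) = {}"
        by (intro Qset_disj) auto
    qed
  qed (simp add: Qset_meas)
  have Nmeas: "\<And>B. B \<in> Pow {..n} \<Longrightarrow> N B \<in> borel_measurable M"
  proof -
    fix B assume B: "B \<in> Pow {..n}"
    have "set_encode B \<in> J" using B unfolding J_def by blast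
    then have "(\<lambda>\<omega>. N (set_decode (set_encode B)) \<omega>) \<in> borel_measurable M"
      using indep unfolding indep_vars_def by blast
    then show "N B \<in> borel_measurable M" using dec[OF B] by simp
  qed
  have Gev_eq: "Gev M mu z n T = (\<Inter>j\<in>J. (\<lambda>\<omega>. N (set_decode j) \<omega>) -` {of_nat (kc n T (set_decode j))..} \<inter> space M)"
    for T
    unfolding Gev_def N_def A_def J_def using Jne[unfolded J_def] dec by auto
  have Gsets: "Gev M mu z n T \<in> sets M" for T
  proof -
    have "(\<Inter>j\<in>J. (\<lambda>\<omega>. N (set_decode j) \<omega>) -` {of_nat (kc n T (set_decode j))..} \<inter> space M) \<in> sets M"
      using indep fJ Jne unfolding indep_vars_def
      by (intro sets.finite_INT measurable_sets[of _ M borel]) (auto intro: borel_closed)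
    then show ?thesis unfolding Gev_eq .
  qed
  show US: "(\<Union>T\<in>Tset n. Gev M mu z n T) \<in> sets M"
    using Gsets finite_Tset by (intro sets.finite_UN) auto
  have probG: "prob (Gev M mu z n T) \<le> (\<Prod>i\<in>{..n}. lam (T i))" if T: "T \<in> Tset n" for T
  proof -
    have "prob (Gev M mu z n T) = (\<Prod>j\<in>J. prob ((\<lambda>\<omega>. N (set_decode j) \<omega>) -` {of_nat (kc n T (set_decode j))..} \<inter> space M))"
      unfolding Gev_eq by (rule indep_varsD[OF indep Jne fJ order_refl]) (auto intro: borel_closed)
    also have "\<dots> = (\<Prod>B\<in>Pow {..n}. prob ((\<lambda>\<omega>. N B \<omega>) -` {of_nat (kc n T B)..} \<inter> space M))"
      unfolding J_def
      by (subst prod.reindex) (auto intro!: prod.cong inj_on_subset[OF inj_on_set_encode] simp: dec finite_subset)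
    also have "\<dots> \<le> (\<Prod>B\<in>Pow {..n}. lam B ^ kc n T B)"
    proof (rule prod_mono, rule conjI)
      fix B assume B: "B \<in> Pow {..n}"
      show "0 \<le> prob ((\<lambda>\<omega>. N B \<omega>) -` {of_nat (kc n T B)..} \<inter> space M)" by simp
      have "(\<lambda>\<omega>. N B \<omega>) -` {of_nat (kc n T B)..} \<inter> space M = {\<omega> \<in> space M. N B \<omega> \<ge> of_nat (kc n T B)}"
        by auto
      then show "prob ((\<lambda>\<omega>. N B \<omega>) -` {of_nat (kc n T B)..} \<inter> space M) \<le> lam B ^ kc n T B"
        using pois_ge[OF Nmeas[OF B] lam_nn Ppois] by simp
    qed
    also have "\<dots> = (\<Prod>i\<in>{..n}. lam (T i))" by (rule kc_prod[OF T])
    finally show ?thesis .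
  qed
  define F where "F i = {B. B \<subseteq> {..n} \<and> i \<in> B}" for i
  have "emeasure M (\<Union>T\<in>Tset n. Gev M mu z n T) \<le> (\<Sum>T\<in>Tset n. emeasure M (Gev M mu z n T))"
    using Gsets finite_Tset by (intro emeasure_subadditive_finite) auto
  also have "\<dots> \<le> (\<Sum>T\<in>Tset n. ennreal (\<Prod>i\<in>{..n}. lam (T i)))"
    using probG by (intro sum_mono) (simp add: emeasure_eq_measure ennreal_leI)
  also have "\<dots> = ennreal (\<Sum>T\<in>Tset n. \<Prod>i\<in>{..n}. lam (T i))"
    using lam_nn by (intro sum_ennreal) (simp add: prod_nonneg)
  also have "(\<Sum>T\<in>Tset n. \<Prod>i\<in>{..n}. lam (T i)) = (\<Prod>i\<in>{..n}. \<Sum>B\<in>F i. lam B)"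
    unfolding Tset_def F_def by (rule prod_sum_PiE[symmetric]) (auto intro: finite_Fi)
  also have "ennreal (\<Prod>i\<in>{..n}. \<Sum>B\<in>F i. lam B) = (\<Prod>i\<in>{..n}. ennreal (\<Sum>B\<in>F i. lam B))"
    using lam_nn by (intro prod_ennreal[symmetric]) (simp add: sum_nonneg)
  also have "\<dots> \<le> (\<Prod>i\<in>{..n}. \<integral>\<^sup>+\<omega>. pmass (mu \<omega>) (S_both (z ! i) (z ! (i + 1))) \<partial>M)"
  proof (rule prod_mono_ennreal)
    fix i assume i: "i \<in> {..n}"
    have FP: "F i \<subseteq> Pow {..n}" by (auto simp: F_def)
    have "ennreal (\<Sum>B\<in>F i. lam B) = (\<Sum>B\<in>F i. ennreal (lam B))"
      using lam_nn by (intro sum_ennreal[symmetric]) simp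
    also have "\<dots> \<le> (\<Sum>B\<in>F i. \<integral>\<^sup>+\<omega>. N B \<omega> \<partial>M)"
      using FP by (intro sum_mono pois_mean_ge[OF Nmeas lam_nn Ppois]) auto
    also have "\<dots> = (\<integral>\<^sup>+\<omega>. (\<Sum>B\<in>F i. N B \<omega>) \<partial>M)"
      using FP Nmeas by (intro nn_integral_sum[symmetric]) auto
    also have "\<dots> = (\<integral>\<^sup>+\<omega>. pmass (mu \<omega>) (S_both (z ! i) (z ! (i + 1))) \<partial>M)"
      using pmass_Sboth[of i n z] i len by (intro nn_integral_cong) (simp add: N_def F_def A_def)
    finally show "ennreal (\<Sum>B\<in>F i. lam B) \<le> (\<integral>\<^sup>+\<omega>. pmass (mu \<omega>) (S_both (z ! i) (z ! (i + 1))) \<partial>M)" .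
  qed
  finally show "emeasure M (\<Union>T\<in>Tset n. Gev M mu z n T) \<le>
      (\<Prod>i\<in>{0..n}. \<integral>\<^sup>+\<omega>. pmass (mu \<omega>) (S_both (z ! i) (z ! (i + 1))) \<partial>M)"
    by (simp add: atLeast0AtMost)
qed


lemma cover:
  fixes mu :: "'w \<Rightarrow> (int \<Rightarrow> int ^ 'd::finite) set \<Rightarrow> nat"
  assumes pp1: "\<forall>c. c \<notin> Wstar \<longrightarrow> mu \<omega> c = 0" and sp: "\<omega> \<in> space M"
    and hx: "x \<in> interlacement_set (mu \<omega>)" and hy: "y \<in> interlacement_set (mu \<omega>)"
    and hd: "\<forall>v\<in>supp (mu \<omega>). \<forall>w\<in>supp (mu \<omega>). graph_dist G_adj (supp (mu \<omega>)) v w \<le> enat k"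
  shows "\<exists>n zs T. n \<le> k \<and> length zs = n \<and> T \<in> Tset n \<and> \<omega> \<in> Gev M mu (x # zs @ [y]) n T"
proof -
  define m where "m = mu \<omega>"
  obtain v where v: "v \<in> supp m" "x \<in> trange v" using hx unfolding interlacement_set_def m_def by blast
  obtain w where w: "w \<in> supp m" "y \<in> trange w" using hy unfolding interlacement_set_def m_def by blast
  define Ps where "Ps = {p. p \<noteq> [] \<and> hd p = v \<and> last p = w \<and> set p \<subseteq> supp m \<and>
                 (\<forall>i < length p - 1. G_adj (p ! i) (p ! (i + 1)))}"
  have "graph_dist G_adj (supp m) v w \<le> enat k" using hd v w unfolding m_def by blast
  then have "(INF p\<in>Ps. enat (length p - 1)) < enat (Suc k)"
    unfolding graph_dist_def Ps_def by (simp add: le_less_trans)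
  then obtain p where p: "p \<in> Ps" "enat (length p - 1) < enat (Suc k)"
    unfolding INF_less_iff by blast
  have pw: "walk G_adj p" using p(1) unfolding Ps_def walk_nth by blast
  have pne: "p \<noteq> []" using p(1) unfolding Ps_def by blast
  obtain q where q: "distinct q" "walk G_adj q" "q \<noteq> []" "hd q = hd p" "last q = last p"
     "set q \<subseteq> set p" "length q \<le> length p"
    using walk_distinct[OF pw pne] by blast
  define n where "n = length q - 1"
  have lenq: "length q = Suc n" using q(3) unfolding n_def by (cases q) auto
  have nk: "n \<le> k" using p(2) q(7) unfolding n_def by simp
  have qsupp: "set q \<subseteq> supp m" using q(6) p(1) unfolding Ps_def by blast
  have q0: "x \<in> trange (q ! 0)" using v q(3,4) p(1) unfolding Ps_def by (simp add: hd_conv_nth)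
  have qn: "y \<in> trange (q ! n)" using w q(3,5) p(1) lenq unfolding Ps_def by (simp add: last_conv_nth)
  have adj: "\<And>i. i < n \<Longrightarrow> trange (q ! i) \<inter> trange (q ! Suc i) \<noteq> {}"
    using q(2) lenq unfolding walk_nth G_adj_def by auto
  define zs where "zs = map (\<lambda>i. SOME a. a \<in> trange (q ! i) \<inter> trange (q ! Suc i)) [0..<n]"
  define z where "z = x # zs @ [y]"
  have lzs: "length zs = n" unfolding zs_def by simp
  have zsi: "\<And>i. i < n \<Longrightarrow> zs ! i \<in> trange (q ! i) \<inter> trange (q ! Suc i)"
  proof -
    fix i assume i: "i < n"
    have eq: "zs ! i = (SOME a. a \<in> trange (q ! i) \<inter> trange (q ! Suc i))" unfolding zs_def using i by simp
    from adj[OF i] obtain a where "a \<in> trange (q ! i) \<inter> trange (q ! Suc i)" by blast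
    then have "(SOME a. a \<in> trange (q ! i) \<inter> trange (q ! Suc i)) \<in> trange (q ! i) \<inter> trange (q ! Suc i)"
      by (rule someI)
    then show "zs ! i \<in> trange (q ! i) \<inter> trange (q ! Suc i)" unfolding eq .
  qed
  have z1: "z ! i \<in> trange (q ! i)" if i: "i \<le> n" for i
  proof (cases i)
    case 0 then show ?thesis using q0 by (simp add: z_def)
  next
    case (Suc j)
    then have j: "j < n" using i by simp
    have "z ! i = (zs @ [y]) ! j" using Suc by (simp add: z_def)
    also have "\<dots> = zs ! j" using j lzs by (simp add: nth_append)
    finally show ?thesis using zsi[OF j] Suc by simp
  qed
  have z2: "z ! Suc i \<in> trange (q ! i)" if i: "i \<le> n" for i
  proof (cases "i < n")
    case True
    have "z ! Suc i = zs ! i" using True lzs by (simp add: z_def nth_append)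
    then show ?thesis using zsi[OF True] by simp
  next
    case False
    then have "i = n" using i by simp
    then show ?thesis using qn lzs by (simp add: z_def nth_append)
  qed
  have lenz: "length z = Suc (Suc n)" using lzs by (simp add: z_def)
  define A where "A = set z"
  have qW: "\<And>i. i \<le> n \<Longrightarrow> q ! i \<in> Wstar"
  proof -
    fix i assume i: "i \<le> n"
    then have "q ! i \<in> supp m" using qsupp lenq by (simp add: subset_iff)
    then show "q ! i \<in> Wstar" using pp1 unfolding supp_def m_def by auto
  qed
  have qpos: "\<And>i. i \<le> n \<Longrightarrow> m (q ! i) > 0"
  proof -
    fix i assume i: "i \<le> n"
    then have "q ! i \<in> supp m" using qsupp lenq by (simp add: subset_iff)
    then show "m (q ! i) > 0" unfolding supp_def by simp
  qed
  have qhit: "\<And>i. i \<le> n \<Longrightarrow> trange (q ! i) \<inter> A \<noteq> {}"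
  proof -
    fix i assume i: "i \<le> n"
    have "z ! i \<in> A" using i lenz by (simp add: A_def)
    then show "trange (q ! i) \<inter> A \<noteq> {}" using z1[OF i] by blast
  qed
  have RK: "\<And>i. i \<le> n \<Longrightarrow> Rng (key A (q ! i)) = trange (q ! i)"
    using qW qhit by (intro Rng_key) (auto simp: A_def)
  define T where "T = restrict (\<lambda>i. {j\<in>{..n}. key A (q ! i) \<in> Pset z j}) {..n}"
  have Ti: "\<And>i. i \<le> n \<Longrightarrow> T i = {j\<in>{..n}. key A (q ! i) \<in> Pset z j}" unfolding T_def by simp
  have TT: "T \<in> Tset n"
    unfolding Tset_def
  proof (rule PiE_I)
    fix i assume i: "i \<in> {..n}"
    have "key A (q ! i) \<in> Pset z i" unfolding Pset_def using RK[of i] i z1[of i] z2[of i] by simp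
    then show "T i \<in> {B. B \<subseteq> {..n} \<and> i \<in> B}" using Ti[of i] i by auto
  qed (simp add: T_def)
  have "\<omega> \<in> Gev M mu z n T"
    unfolding Gev_def
  proof (intro CollectI conjI ballI sp)
    fix B assume B: "B \<in> Pow {..n}"
    define Fs where "Fs = (\<lambda>i. q ! i) ` {i\<in>{..n}. T i = B}"
    have "card Fs = kc n T B"
      unfolding Fs_def kc_def using lenq
      by (intro card_image inj_on_nth[OF q(1)]) auto
    moreover have "of_nat (card Fs) \<le> pmass m (Yset A z n B)"
    proof (rule pmass_card)
      show "finite Fs" unfolding Fs_def by simp
      show "Fs \<subseteq> Yset A z n B"
      proof
        fix c assume "c \<in> Fs"
        then obtain i where i: "i \<le> n" "T i = B" and c: "c = q ! i" unfolding Fs_def by auto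
        have "key A c \<in> Qset z n B"
          using Qset_mem[of B n "key A c" z] B Ti[OF i(1)] i(2) c by auto
        then show "c \<in> Yset A z n B" unfolding Yset_def using qW[OF i(1)] qhit[OF i(1)] c by blast
      qed
      show "\<And>c. c \<in> Fs \<Longrightarrow> 0 < m c" unfolding Fs_def using qpos by auto
    qed
    ultimately show "of_nat (kc n T B) \<le> Ncount (mu \<omega>) (set z) (Qset z n B)"
      unfolding Ncount_Y m_def A_def by simp
  qed
  then show ?thesis using nk lzs TT unfolding z_def by blast
qed

lemma count_space_ge: "a \<in> L \<Longrightarrow> f a \<le> (\<integral>\<^sup>+x. f x \<partial>count_space L)"
proof -
  assume a: "a \<in> L"
  have "f a = (\<integral>\<^sup>+x. f a * indicator {a} x \<partial>count_space L)"
    using a by (subst nn_integral_cmult_indicator) auto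
  also have "\<dots> \<le> (\<integral>\<^sup>+x. f x \<partial>count_space L)"
    by (intro nn_integral_mono) (auto simp: indicator_def)
  finally show ?thesis .
qed

theorem lemma2:
  fixes u :: real and M :: "'w measure" and mu :: "'w \<Rightarrow> (int \<Rightarrow> int ^ 'd::finite) set \<Rightarrow> nat"
    and x y :: "int ^ 'd"
  assumes "CARD('d) \<ge> 3" and "u > 0" and "interlacement_pp u M mu"
  shows "emeasure M {\<omega> \<in> space M. x \<in> interlacement_set (mu \<omega>) \<and> y \<in> interlacement_set (mu \<omega>) \<and>
             (\<forall>v\<in>supp (mu \<omega>). \<forall>w\<in>supp (mu \<omega>).
                 graph_dist G_adj (supp (mu \<omega>)) v w \<le> enat (s_d CARD('d) - 1))}
         \<le> (\<Sum>n\<in>{0..s_d CARD('d) - 1}.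
              \<integral>\<^sup>+ zs. (\<Prod>i\<in>{0..n}.
                   let z = x # zs @ [y] in
                   \<integral>\<^sup>+ \<omega>. pmass (mu \<omega>) (S_both (z ! i) (z ! (i + 1))) \<partial>M)
              \<partial>count_space {zs. length zs = n})"
proof -
  note pp = assms(3) and u = assms(2)
  define K where "K = s_d CARD('d) - 1"
  define L where "L n = {zs :: 'd pt list. length zs = n}" for n
  define H where "H n zs = (\<Union>T\<in>Tset n. Gev M mu (x # zs @ [y]) n T)" for n zs
  define V where "V n = (\<Union>zs\<in>L n. H n zs)" for n
  define E0 where "E0 = {\<omega> \<in> space M. x \<in> interlacement_set (mu \<omega>) \<and> y \<in> interlacement_set (mu \<omega>) \<and>
             (\<forall>v\<in>supp (mu \<omega>). \<forall>w\<in>supp (mu \<omega>).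
                 graph_dist G_adj (supp (mu \<omega>)) v w \<le> enat K)}"
  have pp1: "\<forall>\<omega>\<in>space M. \<forall>c. c \<notin> Wstar \<longrightarrow> mu \<omega> c = 0" using pp unfolding interlacement_pp_def by blast
  have cL: "countable (L n)" for n
  proof -
    have "countable (lists (UNIV :: 'd pt set))" by (intro countable_lists) simp
    then show ?thesis by (rule countable_subset[rotated]) (auto simp: L_def)
  qed
  have lenz: "\<And>zs n. zs \<in> L n \<Longrightarrow> length (x # zs @ [y]) = Suc (Suc n)" by (simp add: L_def)
  have Hs: "\<And>n zs. zs \<in> L n \<Longrightarrow> H n zs \<in> sets M"
    unfolding H_def by (rule stepA(1)[OF pp u lenz])
  have Vs: "\<And>n. V n \<in> sets M"
    unfolding V_def using Hs cL by (intro sets.countable_UN'') auto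
  have sub: "E0 \<subseteq> (\<Union>n\<in>{0..K}. V n)"
  proof
    fix \<omega> assume "\<omega> \<in> E0"
    then have sp: "\<omega> \<in> space M" and hx: "x \<in> interlacement_set (mu \<omega>)" and hy: "y \<in> interlacement_set (mu \<omega>)"
      and hd: "\<forall>v\<in>supp (mu \<omega>). \<forall>w\<in>supp (mu \<omega>). graph_dist G_adj (supp (mu \<omega>)) v w \<le> enat K"
      unfolding E0_def by blast+
    obtain n zs T where nz: "n \<le> K" "length zs = n" "T \<in> Tset n" "\<omega> \<in> Gev M mu (x # zs @ [y]) n T"
      using cover[of mu \<omega> M x y K] pp1 sp hx hy hd by blast
    then have "\<omega> \<in> H n zs" unfolding H_def by blast
    moreover have "zs \<in> L n" using nz by (simp add: L_def)
    ultimately have "\<omega> \<in> V n" unfolding V_def by blast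
    moreover have "n \<in> {0..K}" using nz by simp
    ultimately show "\<omega> \<in> (\<Union>n\<in>{0..K}. V n)" by blast
  qed
  have "emeasure M E0 \<le> emeasure M (\<Union>n\<in>{0..K}. V n)"
    using sub Vs by (intro emeasure_mono) auto
  also have "\<dots> \<le> (\<Sum>n\<in>{0..K}. emeasure M (V n))"
    using Vs by (intro emeasure_subadditive_finite) auto
  also have "\<dots> \<le> (\<Sum>n\<in>{0..K}. \<integral>\<^sup>+ zs. (\<Prod>i\<in>{0..n}.
                   let z = x # zs @ [y] in
                   \<integral>\<^sup>+ \<omega>. pmass (mu \<omega>) (S_both (z ! i) (z ! (i + 1))) \<partial>M)
              \<partial>count_space {zs. length zs = n})"
  proof (rule sum_mono)
    fix n assume "n \<in> {0..K}"
    have "emeasure M (V n) = (\<integral>\<^sup>+\<omega>. indicator (V n) \<omega> \<partial>M)"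
      using Vs by (rule nn_integral_indicator[symmetric])
    also have "\<dots> \<le> (\<integral>\<^sup>+\<omega>. \<integral>\<^sup>+zs. indicator (H n zs) \<omega> \<partial>count_space (L n) \<partial>M)"
    proof (rule nn_integral_mono)
      fix \<omega> assume "\<omega> \<in> space M"
      show "indicator (V n) \<omega> \<le> (\<integral>\<^sup>+zs. indicator (H n zs) \<omega> \<partial>count_space (L n))"
      proof (cases "\<omega> \<in> V n")
        case True
        then obtain zs where zs: "zs \<in> L n" "\<omega> \<in> H n zs" unfolding V_def by blast
        have "indicator (V n) \<omega> = (indicator (H n zs) \<omega> :: ennreal)" using True zs by simp
        also have "\<dots> \<le> (\<integral>\<^sup>+zs. indicator (H n zs) \<omega> \<partial>count_space (L n))"
          by (rule count_space_ge[OF zs(1)])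
        finally show ?thesis .
      qed simp
    qed
    also have "\<dots> = (\<integral>\<^sup>+zs. \<integral>\<^sup>+\<omega>. indicator (H n zs) \<omega> \<partial>M \<partial>count_space (L n))"
      using Hs by (intro nn_integral_count_space_nn_integral cL) auto
    also have "\<dots> = (\<integral>\<^sup>+zs. emeasure M (H n zs) \<partial>count_space (L n))"
      using Hs by (intro nn_integral_cong) (simp add: nn_integral_indicator)
    also have "\<dots> \<le> (\<integral>\<^sup>+ zs. (\<Prod>i\<in>{0..n}.
                   let z = x # zs @ [y] in
                   \<integral>\<^sup>+ \<omega>. pmass (mu \<omega>) (S_both (z ! i) (z ! (i + 1))) \<partial>M)
              \<partial>count_space {zs. length zs = n})"
      unfolding L_def Let_def
    proof (rule nn_integral_mono)
      fix zs assume "zs \<in> space (count_space {zs :: 'd pt list. length zs = n})"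
      then have "zs \<in> L n" by (simp add: L_def)
      then show "emeasure M (H n zs) \<le> (\<Prod>i\<in>{0..n}. \<integral>\<^sup>+ \<omega>. pmass (mu \<omega>) (S_both ((x # zs @ [y]) ! i) ((x # zs @ [y]) ! (i + 1))) \<partial>M)"
        unfolding H_def by (rule stepA(2)[OF pp u lenz])
    qed
    finally show "emeasure M (V n) \<le> (\<integral>\<^sup>+ zs. (\<Prod>i\<in>{0..n}.
                   let z = x # zs @ [y] in
                   \<integral>\<^sup>+ \<omega>. pmass (mu \<omega>) (S_both (z ! i) (z ! (i + 1))) \<partial>M)
              \<partial>count_space {zs. length zs = n})" .
  qed
  finally show ?thesis unfolding E0_def K_def .
qed

end
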